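(* Let $d\ge2$, $n\ge1$, $\gamma$ a positive conductivity on the lattice graph below, and $d-1\le t\le dn-1$. Then the only vector in $\mathbb R^{E_t}$ orthogonal (for the standard inner product) to every $\mathbf J_p^{\mathbf u}$ with $\mathbf u\in\mathcal U^{(t)}$ and $p\in L_t\cup L_{t+1}\cup J_t$ is the zero vector; i.e. $\operatorname{span}\{\mathbf J_p^{\mathbf u}:\mathbf u\in\mathcal U^{(t)},\ p\in L_t\cup L_{t+1}\cup J_t\}^\perp=\{0\}$.
   Context: Lattice: $D=\{x\in\mathbb Z^d:1\le x_i\le n\ \forall i\}$, $\partial D=\{p\in\mathbb Z^d:\min_{q\in D}\|q-p\|_{\ell^1}=1\}$; $E$ = unordered pairs $pq\subseteq D\cup\partial D$ with $\|p-q\|_{\ell^1}=1$, not both in $\partial D$; $\mathcal N(p)=\{q:pq\in E\}$. Conductivity $\gamma:E\to(0,\infty)$, symmetric. $S_\gamma\varphi$ is the unique $\mathbf u\in\mathbb R^{D\cup\partial D}$ with $\sum_{q\in\mathcal N(p)}\gamma_{pq}(\mathbf u_q-\mathbf u_p)=0$ for all $p\in D$ and $\mathbf u=\varphi$ on $\partial D$. Functions on subsets are extended by zero. With $s(x)=\sum_ix_i$: $L_t=\{x\in D:s(x)=t\}$, $L_t^{\mathcal S}=\{x\in D:s(x)\le t\}$, $K_t^+=\{x\in\partial D:s(x)=t,\max_ix_i=n+1\}$, $K_t^-=\{x\in\partial D:s(x)=t,\min_ix_i=0\}$, $K_t^{\mathcal S\pm}=\bigcup_{\ell\le t}K_\ell^\pm$,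 $J_t=K_t^-\cup K_{t+1}^+$, $J_t^{\mathcal S}=K_t^{\mathcal S-}\cup K_{t+1}^{\mathcal S+}$. $T_1^{(t)}:\mathbb R^{J_t^{\mathcal S}}\to\mathbb R^{L_{t+1}}$, $\varphi\mapsto(S_\gamma\varphi)|_{L_{t+1}}$, and $\mathcal U^{(t)}=\{(S_\gamma\varphi)|_{J_t^{\mathcal S}\cup L_t^{\mathcal S}}:\varphi\in\ker T_1^{(t)}\}$; elements of $\mathcal U^{(t)}$ are extended by zero to $D\cup\partial D$. $E_t\subseteq E$ is the set of edges joining $K_t^-$ to $L_{t+1}$, $L_t$ to $K_{t+1}^+$, or $L_t$ to $L_{t+1}$. For a node $p$ and $\mathbf u\in\mathcal U^{(t)}$, $\mathbf J_p^{\mathbf u}\in\mathbb R^{E_t}$ is given by $\mathbf J_p^{\mathbf u}(e)=\mathbf u_p-\mathbf u_q$ if $e=pq\in E_t$ is incident to $p$, and $\mathbf J_p^{\mathbf u}(e)=0$ otherwise. *)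

theory Defs
  imports Complex_Main
begin

(* Lattice points in Z^d are represented as integer lists of length d. *)

definition l1dist :: "int list \<Rightarrow> int list \<Rightarrow> int" where
  "l1dist p q = (\<Sum>i<length p. \<bar>p ! i - q ! i\<bar>)"

definition dom_D :: "nat \<Rightarrow> nat \<Rightarrow> int list set" where
  "dom_D d n = {x. length x = d \<and> (\<forall>i<d. 1 \<le> x ! i \<and> x ! i \<le> int n)}"

(* min_{q in D} ||q - p||_1 = 1 : p is not in D (distance 0) and some q in D is at distance 1 *)
definition bdry_D :: "nat \<Rightarrow> nat \<Rightarrow> int list set" where
  "bdry_D d n = {p. length p = d \<and> p \<notin> dom_D d n \<and> (\<exists>q\<in>dom_D d n. l1dist q p = 1)}"

definition nodes :: "nat \<Rightarrow> nat \<Rightarrow> int list set" where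
  "nodes d n = dom_D d n \<union> bdry_D d n"

definition edges :: "nat \<Rightarrow> nat \<Rightarrow> int list set set" where
  "edges d n = {{p, q} | p q. p \<in> nodes d n \<and> q \<in> nodes d n \<and> l1dist p q = 1
                 \<and> \<not> (p \<in> bdry_D d n \<and> q \<in> bdry_D d n)}"

definition nbrs :: "nat \<Rightarrow> nat \<Rightarrow> int list \<Rightarrow> int list set" where
  "nbrs d n p = {q. {p, q} \<in> edges d n}"

(* u solves the Dirichlet problem with conductivity gamma and boundary data phi;
   u is a function on D \<union> \<partial>D, represented as zero outside the nodes *)
definition is_dirichlet_sol ::
  "nat \<Rightarrow> nat \<Rightarrow> (int list set \<Rightarrow> real) \<Rightarrow> (int list \<Rightarrow> real) \<Rightarrow> (int list \<Rightarrow> real) \<Rightarrow> bool" where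
  "is_dirichlet_sol d n \<gamma> \<phi> u \<longleftrightarrow>
     (\<forall>p\<in>dom_D d n. (\<Sum>q\<in>nbrs d n p. \<gamma> {p, q} * (u q - u p)) = 0)
   \<and> (\<forall>p\<in>bdry_D d n. u p = \<phi> p)
   \<and> (\<forall>p. p \<notin> nodes d n \<longrightarrow> u p = 0)"

definition S_gamma ::
  "nat \<Rightarrow> nat \<Rightarrow> (int list set \<Rightarrow> real) \<Rightarrow> (int list \<Rightarrow> real) \<Rightarrow> (int list \<Rightarrow> real)" where
  "S_gamma d n \<gamma> \<phi> = (THE u. is_dirichlet_sol d n \<gamma> \<phi> u)"

definition ssum :: "int list \<Rightarrow> int" where
  "ssum x = sum_list x"

definition Lset :: "nat \<Rightarrow> nat \<Rightarrow> int \<Rightarrow> int list set" where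
  "Lset d n t = {x \<in> dom_D d n. ssum x = t}"

definition LSset :: "nat \<Rightarrow> nat \<Rightarrow> int \<Rightarrow> int list set" where
  "LSset d n t = {x \<in> dom_D d n. ssum x \<le> t}"

definition Kplus :: "nat \<Rightarrow> nat \<Rightarrow> int \<Rightarrow> int list set" where
  "Kplus d n t = {x \<in> bdry_D d n. ssum x = t \<and> Max (set x) = int n + 1}"

definition Kminus :: "nat \<Rightarrow> nat \<Rightarrow> int \<Rightarrow> int list set" where
  "Kminus d n t = {x \<in> bdry_D d n. ssum x = t \<and> Min (set x) = 0}"

definition KSplus :: "nat \<Rightarrow> nat \<Rightarrow> int \<Rightarrow> int list set" where
  "KSplus d n t = (\<Union>l\<in>{l. l \<le> t}. Kplus d n l)"

definition KSminus :: "nat \<Rightarrow> nat \<Rightarrow> int \<Rightarrow> int list set" where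
  "KSminus d n t = (\<Union>l\<in>{l. l \<le> t}. Kminus d n l)"

definition Jset :: "nat \<Rightarrow> nat \<Rightarrow> int \<Rightarrow> int list set" where
  "Jset d n t = Kminus d n t \<union> Kplus d n (t + 1)"

definition JSset :: "nat \<Rightarrow> nat \<Rightarrow> int \<Rightarrow> int list set" where
  "JSset d n t = KSminus d n t \<union> KSplus d n (t + 1)"

(* ker T_1^{(t)}: phi in R^{J_t^S} (extended by zero) with (S_gamma phi)|_{L_{t+1}} = 0 *)
definition kerT1 :: "nat \<Rightarrow> nat \<Rightarrow> (int list set \<Rightarrow> real) \<Rightarrow> int \<Rightarrow> (int list \<Rightarrow> real) set" where
  "kerT1 d n \<gamma> t = {\<phi>. (\<forall>x. x \<notin> JSset d n t \<longrightarrow> \<phi> x = 0)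
                        \<and> (\<forall>x\<in>Lset d n (t + 1). S_gamma d n \<gamma> \<phi> x = 0)}"

(* U^{(t)}, elements extended by zero to the whole lattice *)
definition Uset :: "nat \<Rightarrow> nat \<Rightarrow> (int list set \<Rightarrow> real) \<Rightarrow> int \<Rightarrow> (int list \<Rightarrow> real) set" where
  "Uset d n \<gamma> t = {(\<lambda>x. if x \<in> JSset d n t \<union> LSset d n t then S_gamma d n \<gamma> \<phi> x else 0)
                     | \<phi>. \<phi> \<in> kerT1 d n \<gamma> t}"

definition Et :: "nat \<Rightarrow> nat \<Rightarrow> int \<Rightarrow> int list set set" where
  "Et d n t = {e \<in> edges d n. \<exists>p q. e = {p, q} \<and>
       ((p \<in> Kminus d n t \<and> q \<in> Lset d n (t + 1))
      \<or> (p \<in> Lset d n t \<and> q \<in> Kplus d n (t + 1))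
      \<or> (p \<in> Lset d n t \<and> q \<in> Lset d n (t + 1)))}"

definition Jvec :: "nat \<Rightarrow> nat \<Rightarrow> int \<Rightarrow> int list \<Rightarrow> (int list \<Rightarrow> real) \<Rightarrow> int list set \<Rightarrow> real" where
  "Jvec d n t p u e = (if e \<in> Et d n t \<and> p \<in> e then u p - u (the_elem (e - {p})) else 0)"

end

theory Submission
  imports Defs "HOL-Library.Product_Lexorder"
begin


definition mv :: "int list \<Rightarrow> nat \<Rightarrow> int \<Rightarrow> int list" where
  "mv x i c = x[i := x ! i + c]"

lemma length_mv[simp]: "length (mv x i c) = length x"
  by (simp add: mv_def)

lemma nth_mv: "j < length x \<Longrightarrow> mv x i c ! j = x ! j + (if j = i then c else 0)"
  by (auto simp: mv_def nth_list_update)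

lemma mv_inv[simp]: "i < length x \<Longrightarrow> mv (mv x i c) i (- c) = x"
  by (simp add: mv_def)

lemma mv_inv'[simp]: "i < length x \<Longrightarrow> mv (mv x i (-1)) i 1 = x"
  using mv_inv[of i x "-1"] by simp

lemma mv_zero[simp]: "mv x i 0 = x"
  by (simp add: mv_def)

lemma sum_list_upd: "k < length xs \<Longrightarrow> sum_list (xs[k := xs ! k + c]) = sum_list xs + (c::int)"
proof (induction xs arbitrary: k)
  case Nil then show ?case by simp
next
  case (Cons a xs) then show ?case by (cases k) auto
qed

lemma ssum_mv[simp]: "i < length x \<Longrightarrow> ssum (mv x i c) = ssum x + c"
  by (simp add: ssum_def mv_def sum_list_upd)

lemma mv_eq_imp: "i < length x \<Longrightarrow> mv x i c = y \<Longrightarrow> x = mv y i (-c)"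
  by auto

lemma tri:
  fixes X :: "'a set" and r :: "'a \<Rightarrow> 'b" and \<rho> :: "'a \<Rightarrow> 'c::linorder"
    and L :: "'a \<Rightarrow> ('b \<Rightarrow> real) \<Rightarrow> real"
  assumes "finite X"
    and H3: "\<forall>x\<in>X. \<forall>g. \<exists>a b. a \<noteq> 0 \<and> (\<forall>v. L x (g(r x := v)) = a * v + b)"
    and H4: "\<forall>x\<in>X. \<forall>x'\<in>X. x' \<noteq> x \<and> \<rho> x \<le> \<rho> x' \<longrightarrow> (\<forall>g v. L x (g(r x' := v)) = L x g)"
  shows "\<exists>g. (\<forall>y. y \<notin> r ` X \<longrightarrow> g y = g0 y) \<and> (\<forall>x\<in>X. L x g = 0)"
proof -
  have "finite S \<Longrightarrow> S \<subseteq> X \<longrightarrow> (\<exists>g. (\<forall>y. y \<notin> r ` S \<longrightarrow> g y = g0 y) \<and> (\<forall>x\<in>S. L x g = 0))" for S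
  proof (induction S rule: finite_ranking_induct[where f = \<rho>])
    case empty
    then show ?case by auto
  next
    case (insert x S)
    show ?case
    proof
      assume sub: "insert x S \<subseteq> X"
      then obtain g where g1: "\<forall>y. y \<notin> r ` S \<longrightarrow> g y = g0 y" and g2: "\<forall>x\<in>S. L x g = 0"
        using insert.IH by blast
      have "x \<in> X" using sub by simp
      with H3 obtain a b where ab: "a \<noteq> 0" "\<forall>v. L x (g(r x := v)) = a * v + b" by blast
      define g' where "g' = g(r x := - b / a)"
      have "L x g' = 0" using ab by (simp add: g'_def)
      moreover have "L y g' = 0" if "y \<in> S" for y
      proof (cases "y = x")
        case True then show ?thesis using \<open>L x g' = 0\<close> by simp
      next
        case False
        have "\<rho> y \<le> \<rho> x" using insert.hyps(2) that by blast
        moreover have "y \<in> X" "x \<in> X" using sub that by auto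
        ultimately have "L y g' = L y g" using H4 False unfolding g'_def by metis
        then show ?thesis using g2 that by simp
      qed
      moreover have "\<forall>y. y \<notin> r ` insert x S \<longrightarrow> g' y = g0 y" using g1 unfolding g'_def by simp
      ultimately show "\<exists>g. (\<forall>y. y \<notin> r ` insert x S \<longrightarrow> g y = g0 y) \<and> (\<forall>x\<in>insert x S. L x g = 0)"
        by blast
    qed
  qed
  then show ?thesis using \<open>finite X\<close> by blast
qed



lemma l1dist_mv:
  assumes "i < length x" "c = 1 \<or> c = -1"
  shows "l1dist x (mv x i c) = 1" "l1dist (mv x i c) x = 1"
proof -
  have "l1dist x (mv x i c) = (\<Sum>j<length x. if j = i then 1 else 0)"
    unfolding l1dist_def using assms by (intro sum.cong) (auto simp: nth_mv)
  also have "\<dots> = 1" using assms by simp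
  finally show "l1dist x (mv x i c) = 1" .
  have "l1dist (mv x i c) x = (\<Sum>j<length x. if j = i then 1 else 0)"
    unfolding l1dist_def using assms by (intro sum.cong) (auto simp: nth_mv)
  also have "\<dots> = 1" using assms by simp
  finally show "l1dist (mv x i c) x = 1" .
qed

lemma l1dist_sym: "length p = length q \<Longrightarrow> l1dist p q = l1dist q p"
  unfolding l1dist_def by (intro sum.cong) auto

lemma l1dist_one:
  assumes len: "length q = length p" and dist: "l1dist p q = 1"
  shows "\<exists>i<length p. \<exists>c. (c = 1 \<or> c = -1) \<and> q = mv p i c"
proof -
  define f where "f j = \<bar>p ! j - q ! j\<bar>" for j
  have s: "sum f {..<length p} = 1" using dist unfolding l1dist_def f_def by simp
  have nn: "\<And>j. 0 \<le> f j" unfolding f_def by simp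
  obtain i where i: "i < length p" "f i \<noteq> 0"
  proof (rule ccontr)
    assume "\<not> thesis"
    then have "\<forall>j<length p. f j = 0" using that by blast
    then have "sum f {..<length p} = 0" by simp
    then show False using s by simp
  qed
  have "f i \<le> sum f {..<length p}"
    by (rule member_le_sum) (use i nn in auto)
  then have fi: "f i = 1" using i nn[of i] s by linarith
  have fj: "f j = 0" if "j < length p" "j \<noteq> i" for j
  proof -
    have "sum f {i, j} \<le> sum f {..<length p}"
      by (rule sum_mono2) (use i that nn in auto)
    then have "f i + f j \<le> 1" using that s by simp
    then show ?thesis using fi nn[of j] by linarith
  qed
  define c where "c = q ! i - p ! i"
  have c: "c = 1 \<or> c = -1" using fi unfolding f_def c_def by auto
  have "q = mv p i c"
  proof (rule nth_equalityI)
    show "length q = length (mv p i c)" using len by simp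
    fix j assume "j < length q"
    then show "q ! j = mv p i c ! j"
      using fj[of j] len by (auto simp: nth_mv c_def f_def)
  qed
  then show ?thesis using i c by blast
qed

locale lat =
  fixes d n :: nat
  assumes d2: "d \<ge> 2" and n1: "n \<ge> 1"
begin

abbreviation "DD \<equiv> dom_D d n"
abbreviation "BB \<equiv> bdry_D d n"
abbreviation "NN \<equiv> nodes d n"
abbreviation "EE \<equiv> edges d n"
abbreviation "nb \<equiv> nbrs d n"

lemma inD: "x \<in> DD \<longleftrightarrow> length x = d \<and> (\<forall>i<d. 1 \<le> x ! i \<and> x ! i \<le> int n)"
  by (simp add: dom_D_def)

lemma inB: "x \<in> BB \<longleftrightarrow> length x = d \<and> x \<notin> DD \<and> (\<exists>q\<in>DD. l1dist q x = 1)"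
  by (simp add: bdry_D_def)

lemma DB_disj: "x \<in> BB \<Longrightarrow> x \<notin> DD"
  by (simp add: bdry_D_def)

lemma len_N: "x \<in> NN \<Longrightarrow> length x = d"
  by (auto simp: nodes_def dom_D_def bdry_D_def)

lemma len_D: "x \<in> DD \<Longrightarrow> length x = d"
  by (auto simp: dom_D_def)

lemma len_B: "x \<in> BB \<Longrightarrow> length x = d"
  by (auto simp: bdry_D_def)

lemma D_nth: "x \<in> DD \<Longrightarrow> i < d \<Longrightarrow> 1 \<le> x ! i \<and> x ! i \<le> int n"
  by (simp add: dom_D_def)

lemma B_struct:
  assumes "b \<in> BB"
  shows "\<exists>z\<in>DD. \<exists>i<d. \<exists>c. (c = 1 \<or> c = -1) \<and> b = mv z i c"
proof -
  obtain z where z: "z \<in> DD" "l1dist z b = 1" using assms by (auto simp: bdry_D_def)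
  have "length b = length z" using assms z by (simp add: len_B len_D)
  from l1dist_one[OF this z(2)] z(1) show ?thesis by (auto simp: len_D)
qed

lemma mv_DB:
  assumes "z \<in> DD" "i < d" "c = 1 \<or> c = -1" "mv z i c \<notin> DD"
  shows "mv z i c \<in> BB"
  using assms l1dist_mv[of i z c] by (auto simp: bdry_D_def len_D)

lemma mv_N:
  assumes "z \<in> DD" "i < d" "c = 1 \<or> c = -1"
  shows "mv z i c \<in> NN"
  using mv_DB[OF assms] by (auto simp: nodes_def)

lemma edge_iff:
  "{x, y} \<in> EE \<longleftrightarrow> x \<in> NN \<and> y \<in> NN \<and> l1dist x y = 1 \<and> \<not> (x \<in> BB \<and> y \<in> BB)"
proof
  assume "{x, y} \<in> EE"
  then obtain p q where pq: "{x, y} = {p, q}" "p \<in> NN" "q \<in> NN" "l1dist p q = 1"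
     "\<not> (p \<in> BB \<and> q \<in> BB)" by (auto simp: edges_def)
  have "length p = length q" using pq by (simp add: len_N)
  then have "l1dist q p = 1" using pq l1dist_sym by metis
  then show "x \<in> NN \<and> y \<in> NN \<and> l1dist x y = 1 \<and> \<not> (x \<in> BB \<and> y \<in> BB)"
    using pq by (auto simp: doubleton_eq_iff)
next
  assume "x \<in> NN \<and> y \<in> NN \<and> l1dist x y = 1 \<and> \<not> (x \<in> BB \<and> y \<in> BB)"
  then show "{x, y} \<in> EE" by (auto simp: edges_def)
qed

lemma nb_iff: "y \<in> nb x \<longleftrightarrow> {x, y} \<in> EE"
  by (simp add: nbrs_def)

lemma nb_sym: "y \<in> nb x \<longleftrightarrow> x \<in> nb y"
  by (simp add: nbrs_def insert_commute)

lemma mv_nb: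
  assumes "z \<in> DD" "i < d" "c = 1 \<or> c = -1"
  shows "mv z i c \<in> nb z" "{z, mv z i c} \<in> EE"
proof -
  have "z \<in> NN" using assms by (simp add: nodes_def)
  moreover have "z \<notin> BB" using assms DB_disj by blast
  moreover have "l1dist z (mv z i c) = 1" using l1dist_mv assms len_D by simp
  ultimately show "{z, mv z i c} \<in> EE" using mv_N[OF assms] by (simp add: edge_iff)
  then show "mv z i c \<in> nb z" by (simp add: nb_iff)
qed

lemma nb_mv:
  assumes "y \<in> nb x"
  shows "\<exists>i<d. \<exists>c. (c = 1 \<or> c = -1) \<and> y = mv x i c"
proof -
  have e: "x \<in> NN" "y \<in> NN" "l1dist x y = 1" using assms by (auto simp: nb_iff edge_iff)
  then have "length y = length x" by (simp add: len_N)
  from l1dist_one[OF this e(3)] show ?thesis using len_N[OF e(1)] by simp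
qed

lemma nb_N: "y \<in> nb x \<Longrightarrow> y \<in> NN"
  by (auto simp: nb_iff edge_iff)

lemma nb_N': "y \<in> nb x \<Longrightarrow> x \<in> NN"
  by (auto simp: nb_iff edge_iff)

lemma nb_B: "y \<in> nb x \<Longrightarrow> x \<in> BB \<Longrightarrow> y \<in> DD"
  by (auto simp: nb_iff edge_iff nodes_def)

lemma finite_N: "finite NN"
proof -
  have "NN \<subseteq> {xs. set xs \<subseteq> {0..int n + 1} \<and> length xs = d}"
  proof
    fix x assume x: "x \<in> NN"
    have "set x \<subseteq> {0..int n + 1}"
    proof (cases "x \<in> DD")
      case True
      then show ?thesis by (auto simp: inD in_set_conv_nth) (metis dual_order.trans zero_le_one, fastforce)
    next
      case False
      then have "x \<in> BB" using x by (simp add: nodes_def)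
      then obtain z i c where zic: "z \<in> DD" "i < d" "c = 1 \<or> c = -1" "x = mv z i c"
        using B_struct by blast
      show ?thesis
      proof
        fix v assume "v \<in> set x"
        then obtain j where j: "j < length x" "x ! j = v" by (auto simp: in_set_conv_nth)
        then have "j < d" using zic len_D by simp
        then show "v \<in> {0..int n + 1}" using j zic D_nth[of z j] D_nth[of z i]
          by (auto simp: nth_mv len_D)
      qed
    qed
    then show "x \<in> {xs. set xs \<subseteq> {0..int n + 1} \<and> length xs = d}" using x len_N by simp
  qed
  moreover have "finite {xs. set xs \<subseteq> {0..int n + 1} \<and> length xs = d}"
    by (rule finite_lists_length_eq) simp
  ultimately show ?thesis by (rule finite_subset)
qed

lemma finite_D: "finite DD"
  by (rule finite_subset[OF _ finite_N]) (auto simp: nodes_def)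

lemma finite_nb: "finite (nb x)"
  by (rule finite_subset[OF _ finite_N]) (auto dest: nb_N)

lemma finite_E: "finite EE"
proof -
  have "EE \<subseteq> Pow NN" by (auto simp: edges_def)
  then show ?thesis using finite_N by (meson finite_Pow_iff finite_subset)
qed

lemma mv_B_cases:
  assumes "z \<in> DD" "i < d" "c = 1 \<or> c = -1" "mv z i c \<notin> DD"
  shows "(c = -1 \<and> z ! i = 1) \<or> (c = 1 \<and> z ! i = int n)"
proof (rule ccontr)
  assume a: "\<not> ?thesis"
  have "mv z i c \<in> DD"
    unfolding inD
  proof (intro conjI)
    show "length (mv z i c) = d" using assms len_D by simp
    show "\<forall>j<d. 1 \<le> mv z i c ! j \<and> mv z i c ! j \<le> int n"
    proof (intro allI impI)
      fix j assume "j < d"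
      then show "1 \<le> mv z i c ! j \<and> mv z i c ! j \<le> int n"
        using assms a D_nth[of z j] D_nth[of z i] by (auto simp: nth_mv len_D)
    qed
  qed
  then show False using assms by simp
qed

lemma B_nb_unique:
  assumes z: "z \<in> DD" "i < d" "c = 1 \<or> c = -1" and b: "mv z i c \<in> BB"
    and y: "y \<in> nb (mv z i c)"
  shows "y = z"
proof -
  have yD: "y \<in> DD" using nb_B[OF y b] .
  obtain j c' where jc: "j < d" "c' = 1 \<or> c' = -1" "y = mv (mv z i c) j c'"
    using nb_mv[OF y] by blast
  have bnd: "(c = -1 \<and> z ! i = 1) \<or> (c = 1 \<and> z ! i = int n)"
    using mv_B_cases[OF z] b DB_disj by blast
  have lz: "length z = d" using z len_D by simp
  have "j = i"
  proof (rule ccontr)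
    assume "j \<noteq> i"
    then have "y ! i = z ! i + c" using jc z lz by (simp add: nth_mv)
    then show False using D_nth[OF yD z(2)] bnd by auto
  qed
  moreover have "c' = - c"
  proof -
    have "y ! i = z ! i + c + c'" using jc z lz \<open>j = i\<close> by (simp add: nth_mv)
    then show ?thesis using D_nth[OF yD z(2)] bnd jc(2) by auto
  qed
  ultimately show ?thesis using jc lz z by simp
qed

end



locale latg = lat +
  fixes \<gamma> :: "int list set \<Rightarrow> real"
  assumes gpos: "\<forall>e\<in>edges d n. \<gamma> e > 0"
begin

lemma gpos_nb: "y \<in> nb x \<Longrightarrow> \<gamma> {x, y} > 0"
  using gpos by (simp add: nb_iff)

lemma maxp:
  assumes harm: "\<forall>p\<in>DD. (\<Sum>y\<in>nb p. \<gamma> {p, y} * (h y - h p)) = 0"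
    and bz: "\<forall>p\<in>BB. h p = 0"
  shows "\<forall>p\<in>DD. h p \<le> 0"
proof (rule ccontr)
  assume "\<not> (\<forall>p\<in>DD. h p \<le> 0)"
  then obtain p0 where p0: "p0 \<in> DD" "h p0 > 0" by auto
  define M where "M = Max (h ` DD)"
  have "h p0 \<le> M" unfolding M_def using p0 finite_D by (intro Max_ge) auto
  then have Mpos: "M > 0" using p0 by simp
  define S where "S = {p\<in>DD. h p = M}"
  have "M \<in> h ` DD" unfolding M_def using p0 finite_D by (intro Max_in) auto
  then have Sne: "S \<noteq> {}" unfolding S_def by auto
  have Sfin: "finite S" unfolding S_def using finite_D by simp
  define m where "m = Min ((\<lambda>p. p ! 0) ` S)"
  have "m \<in> (\<lambda>p. p ! 0) ` S" unfolding m_def using Sne Sfin by (intro Min_in) auto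
  then obtain p where pS: "p \<in> S" "p ! 0 = m" by auto
  have pmin: "\<forall>p'\<in>S. p ! 0 \<le> p' ! 0" using pS Sfin unfolding m_def by (auto intro: Min_le)
  have pD: "p \<in> DD" and hp: "h p = M" using pS by (auto simp: S_def)
  have d0: "0 < d" using d2 by simp
  define y where "y = mv p 0 (-1)"
  have ynb: "y \<in> nb p" unfolding y_def using mv_nb[OF pD d0] by simp
  have le: "h y' \<le> M" if "y' \<in> nb p" for y'
  proof -
    have "y' \<in> NN" using nb_N that by blast
    then show ?thesis
    proof (cases "y' \<in> DD")
      case True then show ?thesis unfolding M_def using finite_D by (intro Max_ge) auto
    next
      case False then have "y' \<in> BB" using \<open>y' \<in> NN\<close> by (simp add: nodes_def)
      then show ?thesis using bz Mpos by simp
    qed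
  qed
  have "(\<Sum>y'\<in>nb p. - (\<gamma> {p, y'} * (h y' - h p))) = 0"
    using harm pD unfolding sum_negf by simp
  moreover have "\<forall>y'\<in>nb p. 0 \<le> - (\<gamma> {p, y'} * (h y' - h p))"
  proof
    fix y' assume "y' \<in> nb p"
    then have "\<gamma> {p, y'} > 0" "h y' - h p \<le> 0" using gpos_nb le hp by auto
    then show "0 \<le> - (\<gamma> {p, y'} * (h y' - h p))"
      by (simp add: mult_nonneg_nonpos)
  qed
  ultimately have "\<forall>y'\<in>nb p. - (\<gamma> {p, y'} * (h y' - h p)) = 0"
    by (subst sum_nonneg_eq_0_iff[OF finite_nb, symmetric]) auto
  then have "\<gamma> {p, y} * (h y - h p) = 0" using ynb by auto
  then have hy: "h y = M" using gpos_nb[OF ynb] hp by simp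
  have lp: "length p = d" using pD len_D by simp
  show False
  proof (cases "y \<in> DD")
    case True
    then have "y \<in> S" using hy by (simp add: S_def)
    moreover have "y ! 0 = p ! 0 - 1" unfolding y_def using lp d0 by (simp add: nth_mv)
    ultimately show False using pmin by fastforce
  next
    case False
    then have "y \<in> BB" unfolding y_def using mv_DB[OF pD d0] by simp
    then show False using bz hy Mpos by simp
  qed
qed

lemma uniq:
  assumes u: "is_dirichlet_sol d n \<gamma> \<phi> u" and v: "is_dirichlet_sol d n \<gamma> \<phi> v"
  shows "u = v"
proof -
  have harm: "(\<Sum>y\<in>nb p. \<gamma> {p, y} * ((f y - g y) - (f p - g p))) = 0"
    if "p \<in> DD" "is_dirichlet_sol d n \<gamma> \<phi> f" "is_dirichlet_sol d n \<gamma> \<phi> g" for p f g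
  proof -
    have "(\<Sum>y\<in>nb p. \<gamma> {p, y} * ((f y - g y) - (f p - g p)))
        = (\<Sum>y\<in>nb p. \<gamma> {p, y} * (f y - f p)) - (\<Sum>y\<in>nb p. \<gamma> {p, y} * (g y - g p))"
      unfolding sum_subtractf[symmetric] by (intro sum.cong) (auto simp: right_diff_distrib)
    then show ?thesis using that by (simp add: is_dirichlet_sol_def)
  qed
  have bz: "\<forall>p\<in>BB. f p - g p = 0"
    if "is_dirichlet_sol d n \<gamma> \<phi> f" "is_dirichlet_sol d n \<gamma> \<phi> g" for f g
    using that by (simp add: is_dirichlet_sol_def)
  have A: "\<forall>p\<in>DD. u p - v p \<le> 0"
    using maxp[of "\<lambda>x. u x - v x"] harm[OF _ u v] bz[OF u v] by blast
  have B: "\<forall>p\<in>DD. v p - u p \<le> 0"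
    using maxp[of "\<lambda>x. v x - u x"] harm[OF _ v u] bz[OF v u] by blast
  show ?thesis
  proof
    fix x
    show "u x = v x"
    proof (cases "x \<in> NN")
      case True
      show ?thesis
      proof (cases "x \<in> DD")
        case True
        then show ?thesis using A B by force
      next
        case False
        then have "x \<in> BB" using \<open>x \<in> NN\<close> by (simp add: nodes_def)
        then show ?thesis using u v by (simp add: is_dirichlet_sol_def)
      qed
    next
      case False
      then show ?thesis using u v by (simp add: is_dirichlet_sol_def)
    qed
  qed
qed

lemma S_eq: "is_dirichlet_sol d n \<gamma> \<phi> u \<Longrightarrow> S_gamma d n \<gamma> \<phi> = u"
  unfolding S_gamma_def by (rule the_equality) (auto intro: uniq)

end



context lat
begin

lemma mv_down_B:
  assumes z: "z \<in> DD" "i < d" and nd: "mv z i (-1) \<notin> DD"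
  shows "mv z i (-1) \<in> BB" "z ! i = 1" "Min (set (mv z i (-1))) = 0"
    "\<forall>v\<in>set (mv z i (-1)). v \<le> int n" "mv z i (-1) \<in> Kminus d n (ssum z - 1)"
proof -
  show b: "mv z i (-1) \<in> BB" using mv_DB[OF z _ nd] by simp
  show zi: "z ! i = 1" using mv_B_cases[OF z _ nd] by simp
  have lz: "length z = d" using z len_D by simp
  show le: "\<forall>v\<in>set (mv z i (-1)). v \<le> int n"
  proof
    fix v assume "v \<in> set (mv z i (-1))"
    then have "\<exists>j<length (mv z i (-1)). mv z i (-1) ! j = v" by (simp only: in_set_conv_nth)
    then obtain j where j0: "j < length (mv z i (-1))" "mv z i (-1) ! j = v" by blast
    then have j: "j < d" "mv z i (-1) ! j = v" using lz by auto
    then show "v \<le> int n" using D_nth[OF z(1) j(1)] lz n1 by (auto simp: nth_mv)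
  qed
  show m: "Min (set (mv z i (-1))) = 0"
  proof (rule Min_eqI)
    show "finite (set (mv z i (-1)))" by simp
    show "0 \<le> v" if "v \<in> set (mv z i (-1))" for v
    proof -
      have "\<exists>j<length (mv z i (-1)). mv z i (-1) ! j = v" using that by (simp only: in_set_conv_nth)
      then obtain j where j0: "j < length (mv z i (-1))" "mv z i (-1) ! j = v" by blast
      then have j: "j < d" "mv z i (-1) ! j = v" using lz by auto
      then show ?thesis using D_nth[OF z(1) j(1)] zi lz by (auto simp: nth_mv)
    qed
    show "0 \<in> set (mv z i (-1))"
      using zi z lz by (auto simp: in_set_conv_nth nth_mv intro!: exI[of _ i])
  qed
  show "mv z i (-1) \<in> Kminus d n (ssum z - 1)"
    using b m z lz by (simp add: Kminus_def)
qed

lemma Kp_struct: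
  assumes "b \<in> Kplus d n l"
  shows "\<exists>z\<in>DD. \<exists>i<d. z ! i = int n \<and> b = mv z i 1"
proof -
  have bB: "b \<in> BB" and mx: "Max (set b) = int n + 1" using assms by (auto simp: Kplus_def)
  obtain z i c where zic: "z \<in> DD" "i < d" "c = 1 \<or> c = -1" "b = mv z i c"
    using B_struct[OF bB] by blast
  have cases: "(c = -1 \<and> z ! i = 1) \<or> (c = 1 \<and> z ! i = int n)"
    using mv_B_cases[OF zic(1-3)] zic(4) bB DB_disj by blast
  have "c = 1"
  proof (rule ccontr)
    assume "c \<noteq> 1"
    then have c: "c = -1" using zic by simp
    have "mv z i (-1) \<notin> DD" using zic c bB DB_disj by simp
    then have "\<forall>v\<in>set b. v \<le> int n" using mv_down_B(4)[OF zic(1,2)] zic c by simp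
    moreover have "set b \<noteq> {}"
    proof -
      have "length b = d" using zic len_D by simp
      then show ?thesis using d2 by (cases b) auto
    qed
    ultimately have "Max (set b) \<le> int n" by simp
    then show False using mx by simp
  qed
  then show ?thesis using zic cases by auto
qed

lemma Km_struct:
  assumes "b \<in> Kminus d n l"
  shows "\<exists>z\<in>DD. \<exists>i<d. b = mv z i (-1) \<and> b \<notin> DD"
proof -
  have bB: "b \<in> BB" and mn: "Min (set b) = 0" using assms by (auto simp: Kminus_def)
  obtain z i c where zic: "z \<in> DD" "i < d" "c = 1 \<or> c = -1" "b = mv z i c"
    using B_struct[OF bB] by blast
  have "c = -1"
  proof (rule ccontr)
    assume "c \<noteq> -1"
    then have c: "c = 1" using zic by simp
    have lz: "length z = d" using zic len_D by simp
    have "\<forall>v\<in>set b. 1 \<le> v"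
    proof
      fix v assume "v \<in> set b"
      then obtain j where j: "j < d" "b ! j = v" using zic lz by (auto simp: in_set_conv_nth)
      then show "1 \<le> v" using D_nth[OF zic(1) j(1)] zic c lz by (auto simp: nth_mv)
    qed
    moreover have "set b \<noteq> {}"
    proof -
      have "length b = d" using zic len_D by simp
      then show ?thesis using d2 by (cases b) auto
    qed
    ultimately have "1 \<le> Min (set b)" by simp
    then show False using mn by simp
  qed
  then show ?thesis using zic bB DB_disj by auto
qed

lemma Kp_not_Km: "b \<in> Kplus d n l \<Longrightarrow> b \<notin> Kminus d n l'"
proof
  assume p: "b \<in> Kplus d n l" and m: "b \<in> Kminus d n l'"
  obtain z i where zi: "z \<in> DD" "i < d" "b = mv z i (-1)" "b \<notin> DD" using Km_struct[OF m] by blast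
  have "\<forall>v\<in>set b. v \<le> int n" using mv_down_B(4)[OF zi(1,2)] zi by simp
  moreover have "set b \<noteq> {}"
  proof -
    have "length b = d" using zi len_D by simp
    then show ?thesis using d2 by (cases b) auto
  qed
  ultimately have "Max (set b) \<le> int n" by simp
  then show False using p by (simp add: Kplus_def)
qed

end



locale latt = latg +
  fixes t :: int
  assumes tlo: "int d - 1 \<le> t" and thi: "t \<le> int d * int n - 1"
begin

abbreviation "AA \<equiv> Lset d n t \<union> Kminus d n t"
abbreviation "BBt \<equiv> Lset d n (t + 1) \<union> Kplus d n (t + 1)"

lemma A_lev: "p \<in> AA \<Longrightarrow> ssum p = t"
  by (auto simp: Lset_def Kminus_def)

lemma B_lev: "p \<in> BBt \<Longrightarrow> ssum p = t + 1"
  by (auto simp: Lset_def Kplus_def)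

lemma A_N: "p \<in> AA \<Longrightarrow> p \<in> NN"
  by (auto simp: Lset_def Kminus_def nodes_def)

lemma B_N: "p \<in> BBt \<Longrightarrow> p \<in> NN"
  by (auto simp: Lset_def Kplus_def nodes_def)

lemma Et_alt: "Et d n t = {e \<in> EE. \<exists>p q. e = {p, q} \<and> p \<in> AA \<and> q \<in> BBt}"
proof -
  have "\<not> (p \<in> Kminus d n t \<and> q \<in> Kplus d n (t + 1))" if "{p, q} \<in> EE" for p q
    using that by (auto simp: edge_iff Kminus_def Kplus_def)
  then show ?thesis unfolding Et_def by blast
qed

lemma finite_Et: "finite (Et d n t)"
  by (rule finite_subset[OF _ finite_E]) (auto simp: Et_def)

lemma Et_at_A:
  assumes "p \<in> AA"
  shows "{e \<in> Et d n t. p \<in> e} = (\<lambda>y. {p, y}) ` (nb p \<inter> BBt)"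
proof
  show "{e \<in> Et d n t. p \<in> e} \<subseteq> (\<lambda>y. {p, y}) ` (nb p \<inter> BBt)"
  proof
    fix e assume "e \<in> {e \<in> Et d n t. p \<in> e}"
    then obtain p' q' where e: "e \<in> EE" "e = {p', q'}" "p' \<in> AA" "q' \<in> BBt" "p \<in> e"
      unfolding Et_alt by blast
    have "p \<noteq> q'" using A_lev[OF assms] B_lev[OF e(4)] by auto
    then have "p = p'" using e by auto
    then show "e \<in> (\<lambda>y. {p, y}) ` (nb p \<inter> BBt)" using e by (auto simp: nb_iff)
  qed
  show "(\<lambda>y. {p, y}) ` (nb p \<inter> BBt) \<subseteq> {e \<in> Et d n t. p \<in> e}"
    using assms unfolding Et_alt by (auto simp: nb_iff)
qed

lemma Et_at_B:
  assumes "q \<in> BBt"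
  shows "{e \<in> Et d n t. q \<in> e} = (\<lambda>x. {x, q}) ` (nb q \<inter> AA)"
proof
  show "{e \<in> Et d n t. q \<in> e} \<subseteq> (\<lambda>x. {x, q}) ` (nb q \<inter> AA)"
  proof
    fix e assume "e \<in> {e \<in> Et d n t. q \<in> e}"
    then obtain p' q' where e: "e \<in> EE" "e = {p', q'}" "p' \<in> AA" "q' \<in> BBt" "q \<in> e"
      unfolding Et_alt by blast
    have "q \<noteq> p'" using B_lev[OF assms] A_lev[OF e(3)] by auto
    then have "q = q'" using e by auto
    then show "e \<in> (\<lambda>x. {x, q}) ` (nb q \<inter> AA)" using e by (auto simp: nb_iff insert_commute)
  qed
  show "(\<lambda>x. {x, q}) ` (nb q \<inter> AA) \<subseteq> {e \<in> Et d n t. q \<in> e}"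
    using assms unfolding Et_alt by (auto simp: nb_iff insert_commute)
qed

lemma Jsum_gen:
  "(\<Sum>e\<in>Et d n t. w e * Jvec d n t p u e)
     = (\<Sum>e\<in>{e \<in> Et d n t. p \<in> e}. w e * (u p - u (the_elem (e - {p}))))"
proof -
  have "(\<Sum>e\<in>Et d n t. w e * Jvec d n t p u e)
      = (\<Sum>e\<in>Et d n t. if p \<in> e then w e * (u p - u (the_elem (e - {p}))) else 0)"
    by (intro sum.cong) (auto simp: Jvec_def)
  also have "\<dots> = (\<Sum>e\<in>{e \<in> Et d n t. p \<in> e}. w e * (u p - u (the_elem (e - {p}))))"
    by (rule sum.inter_filter[symmetric]) (rule finite_Et)
  finally show ?thesis .
qed

lemma Jsum_A:
  assumes "p \<in> AA"
  shows "(\<Sum>e\<in>Et d n t. w e * Jvec d n t p u e) = (\<Sum>y\<in>nb p \<inter> BBt. w {p, y} * (u p - u y))"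
proof -
  have inj: "inj_on (\<lambda>y. {p, y}) (nb p \<inter> BBt)"
    by (rule inj_onI) (auto simp: doubleton_eq_iff)
  have ne: "y \<noteq> p" if "y \<in> BBt" for y using A_lev[OF assms] B_lev[OF that] by auto
  show ?thesis unfolding Jsum_gen Et_at_A[OF assms] sum.reindex[OF inj] o_def
  proof (intro sum.cong refl)
    fix y assume "y \<in> nb p \<inter> BBt"
    then have "{p, y} - {p} = {y}" using ne by auto
    then show "w {p, y} * (u p - u (the_elem ({p, y} - {p}))) = w {p, y} * (u p - u y)" by simp
  qed
qed

lemma Jsum_B:
  assumes "q \<in> BBt"
  shows "(\<Sum>e\<in>Et d n t. w e * Jvec d n t q u e) = (\<Sum>x\<in>nb q \<inter> AA. w {x, q} * (u q - u x))"
proof -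
  have inj: "inj_on (\<lambda>x. {x, q}) (nb q \<inter> AA)"
    by (rule inj_onI) (auto simp: doubleton_eq_iff)
  have ne: "x \<noteq> q" if "x \<in> AA" for x using B_lev[OF assms] A_lev[OF that] by auto
  show ?thesis unfolding Jsum_gen Et_at_B[OF assms] sum.reindex[OF inj] o_def
  proof (intro sum.cong refl)
    fix x assume "x \<in> nb q \<inter> AA"
    then have "{x, q} - {q} = {x}" using ne by auto
    then show "w {x, q} * (u q - u (the_elem ({x, q} - {q}))) = w {x, q} * (u q - u x)" by simp
  qed
qed

end



lemma arith_H4:
  fixes s s' a0 a1 b0 b1 q0 q1 c t :: int and j k :: nat
  assumes "s' = s + c + 1"
    "b0 = a0 + (if j = 0 then c else 0) + (if k = 0 then 1 else 0)"
    "b1 = a1 + (if j = 1 then c else 0) + (if k = 1 then 1 else 0)"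
    "s \<le> t + 1" "s' \<le> t + 1" "(k = 1) = (s' = t + 1 \<and> \<not> (q1 - q0 \<le> b1 - b0))"
    "\<not> (j = k \<and> c = -1)" "k < 2" "c = 0 \<or> c = 1 \<or> c = -1"
  shows "(if s' = t + 1 then (0::int, if q1 - q0 \<le> b1 - b0 then b1 - b0 else - (b1 - b0)) else (1, - (s' + b0)))
       < (if s = t + 1 then (0, if q1 - q0 \<le> a1 - a0 then a1 - a0 else - (a1 - a0)) else (1, - (s + a0)))"
proof -
  have k: "k = 0 \<or> k = 1" using assms by auto
  have j: "j = 0 \<or> j = 1 \<or> j \<ge> 2" by auto
  from k j assms(9) show ?thesis
    using assms(1-8) by (elim disjE) (auto split: if_splits)
qed

lemma arith_DN:
  fixes b0 b1 q0 q1 :: int and j k :: nat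
  assumes "b0 = q0 + (if j = 0 then -1 else 0) + (if k = 0 then 1 else 0)"
    "b1 = q1 + (if j = 1 then -1 else 0) + (if k = 1 then 1 else 0)"
    "(k = 1) = (\<not> (q1 - q0 \<le> b1 - b0))" "j \<noteq> k" "k < 2"
  shows False
proof -
  have k: "k = 0 \<or> k = 1" using assms by auto
  have j: "j = 0 \<or> j = 1 \<or> j \<ge> 2" by auto
  from k j show ?thesis using assms by (elim disjE) (auto split: if_splits)
qed

locale cons = latt +
  fixes q :: "int list"
  assumes qL: "q \<in> Lset d n (t + 1)"
begin

definition "XX = {x \<in> DD. ssum x \<le> t + 1 \<and> x \<noteq> q}"
definition "kap x = x ! 1 - x ! 0"
definition "grp x \<longleftrightarrow> kap q \<le> kap x"
definition "rr x = (if ssum x = t + 1 \<and> \<not> grp x then mv x 1 (-1) else mv x 0 (-1))"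
definition "rho x = (if ssum x = t + 1 then (0::int, if grp x then kap x else - kap x)
                     else (1, - (ssum x + x ! 0)))"
definition "LL x g = (\<Sum>y\<in>nb x. \<gamma> {x, y} * (g y - g x))"
definition "DN = {mv q i (-1) | i. i < d}"

lemma qD: "q \<in> DD" "ssum q = t + 1" "length q = d"
  using qL by (auto simp: Lset_def len_D)

lemma XX_D: "x \<in> XX \<Longrightarrow> x \<in> DD"
  by (simp add: XX_def)

lemma rr_form:
  assumes "x \<in> XX"
  shows "\<exists>k. k < 2 \<and> rr x = mv x k (-1) \<and> ((k = 1) = (ssum x = t + 1 \<and> \<not> grp x))"
  by (cases "ssum x = t + 1 \<and> \<not> grp x") (auto simp: rr_def intro: exI[of _ 0] exI[of _ 1])

lemma rr_nb: "x \<in> XX \<Longrightarrow> rr x \<in> nb x"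
proof -
  assume x: "x \<in> XX"
  obtain k where "k < 2" "rr x = mv x k (-1)" using rr_form[OF x] by blast
  then show ?thesis using mv_nb(1)[OF XX_D[OF x], of k "-1"] d2 by simp
qed

lemma rr_ssum: "x \<in> XX \<Longrightarrow> ssum (rr x) = ssum x - 1"
proof -
  assume x: "x \<in> XX"
  obtain k where "k < 2" "rr x = mv x k (-1)" using rr_form[OF x] by blast
  then show ?thesis using d2 len_D[OF XX_D[OF x]] by simp
qed

lemma rr_ne: "x \<in> XX \<Longrightarrow> rr x \<noteq> x"
  using rr_ssum by force

lemma H3: "\<forall>x\<in>XX. \<forall>g. \<exists>a b. a \<noteq> 0 \<and> (\<forall>v. LL x (g(rr x := v)) = a * v + b)"
proof (intro ballI allI)
  fix x g assume x: "x \<in> XX"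
  have rn: "rr x \<in> nb x" and ne: "rr x \<noteq> x" using rr_nb[OF x] rr_ne[OF x] by auto
  define b where "b = (\<Sum>y\<in>nb x - {rr x}. \<gamma> {x, y} * (g y - g x)) - \<gamma> {x, rr x} * g x"
  have "LL x (g(rr x := v)) = \<gamma> {x, rr x} * v + b" for v
  proof -
    have "LL x (g(rr x := v)) = \<gamma> {x, rr x} * ((g(rr x := v)) (rr x) - (g(rr x := v)) x)
          + (\<Sum>y\<in>nb x - {rr x}. \<gamma> {x, y} * ((g(rr x := v)) y - (g(rr x := v)) x))"
      unfolding LL_def by (rule sum.remove[OF finite_nb rn])
    also have "(\<Sum>y\<in>nb x - {rr x}. \<gamma> {x, y} * ((g(rr x := v)) y - (g(rr x := v)) x))
             = (\<Sum>y\<in>nb x - {rr x}. \<gamma> {x, y} * (g y - g x))"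
      using ne by (intro sum.cong) auto
    also have "\<gamma> {x, rr x} * ((g(rr x := v)) (rr x) - (g(rr x := v)) x) = \<gamma> {x, rr x} * (v - g x)"
      using ne by simp
    finally have eq: "LL x (g(rr x := v)) = \<gamma> {x, rr x} * (v - g x) + (\<Sum>y\<in>nb x - {rr x}. \<gamma> {x, y} * (g y - g x))" .
    show ?thesis unfolding eq b_def by (simp add: algebra_simps)
  qed
  moreover have "\<gamma> {x, rr x} \<noteq> 0" using gpos_nb[OF rn] by simp
  ultimately show "\<exists>a b. a \<noteq> 0 \<and> (\<forall>v. LL x (g(rr x := v)) = a * v + b)" by blast
qed

lemma H4comb:
  assumes x: "x \<in> XX" and x': "x' \<in> XX" and ne: "x' \<noteq> x" and r: "rr x' \<in> insert x (nb x)"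
  shows "rho x' < rho x"
proof -
  have lx: "length x = d" and lx': "length x' = d" using x x' XX_D len_D by auto
  obtain k where k: "k < 2" "rr x' = mv x' k (-1)" "(k = 1) = (ssum x' = t + 1 \<and> \<not> grp x')"
    using rr_form[OF x'] by blast
  obtain j c where jc: "j < d" "c = 0 \<or> c = 1 \<or> c = -1" "rr x' = mv x j c"
  proof (cases "rr x' = x")
    case True
    then show ?thesis using that[of 0 0] d2 by simp
  next
    case False
    then have "rr x' \<in> nb x" using r by simp
    then show ?thesis using nb_mv that by blast
  qed
  have kd: "k < d" using k d2 by simp
  have xe: "x' = mv (mv x j c) k 1"
    using mv_eq_imp[of k x' "-1" "mv x j c"] k jc lx' kd by simp
  have s': "ssum x' = ssum x + c + 1" using xe jc lx kd by simp
  have b0: "x' ! 0 = x ! 0 + (if j = 0 then c else 0) + (if k = 0 then 1 else 0)"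
    using xe jc lx kd d2 by (simp add: nth_mv)
  have b1: "x' ! 1 = x ! 1 + (if j = 1 then c else 0) + (if k = 1 then 1 else 0)"
    using xe jc lx kd d2 by (simp add: nth_mv)
  have nj: "\<not> (j = k \<and> c = -1)"
  proof
    assume "j = k \<and> c = -1"
    then have "x' = x" using xe lx kd by simp
    then show False using ne by simp
  qed
  have s: "ssum x \<le> t + 1" "ssum x' \<le> t + 1" using x x' by (auto simp: XX_def)
  show ?thesis
    unfolding rho_def grp_def kap_def
    by (rule arith_H4[OF s' b0 b1 s k(3)[unfolded grp_def kap_def] nj k(1) jc(2)])
qed

lemma H4: "\<forall>x\<in>XX. \<forall>x'\<in>XX. x' \<noteq> x \<and> rho x \<le> rho x' \<longrightarrow> (\<forall>g v. LL x (g(rr x' := v)) = LL x g)"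
proof (intro ballI impI allI)
  fix x x' g v assume x: "x \<in> XX" and x': "x' \<in> XX" and c: "x' \<noteq> x \<and> rho x \<le> rho x'"
  have "rr x' \<notin> insert x (nb x)" using H4comb[OF x x'] c by force
  then show "LL x (g(rr x' := v)) = LL x g" unfolding LL_def by (intro sum.cong) auto
qed

lemma finite_XX: "finite XX"
  by (rule finite_subset[OF _ finite_D]) (auto simp: XX_def)

lemma DN_lev: "y \<in> DN \<Longrightarrow> ssum y = t \<and> y \<in> NN \<and> y \<in> nb q"
  using qD mv_nb[OF qD(1)] mv_N[OF qD(1)] by (auto simp: DN_def)

lemma KS_in: "y \<in> Kminus d n l \<Longrightarrow> l \<le> t \<Longrightarrow> y \<in> JSset d n t"
  by (auto simp: JSset_def KSminus_def)

lemma Kp_JS: "y \<in> Kplus d n (t + 1) \<Longrightarrow> y \<in> JSset d n t"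
  by (auto simp: JSset_def KSplus_def)

lemma Kp_lev: "y \<in> Kplus d n (t + 1) \<Longrightarrow> ssum y = t + 1 \<and> y \<in> BB"
  by (auto simp: Kplus_def)

lemma DN_JS: "y \<in> DN \<Longrightarrow> y \<in> BB \<Longrightarrow> y \<in> JSset d n t"
proof -
  assume y: "y \<in> DN" "y \<in> BB"
  then obtain i where i: "i < d" "y = mv q i (-1)" by (auto simp: DN_def)
  have "y \<notin> DD" using y DB_disj by blast
  then have "y \<in> Kminus d n (ssum q - 1)" using mv_down_B(5)[OF qD(1) i(1)] i by simp
  then show ?thesis using qD KS_in by simp
qed

lemma rX_lev: "y \<in> rr ` XX \<Longrightarrow> ssum y \<le> t \<and> y \<in> NN"
  using rr_ssum rr_nb nb_N by (force simp: XX_def)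

lemma rX_JS: "y \<in> rr ` XX \<Longrightarrow> y \<in> BB \<Longrightarrow> y \<in> JSset d n t"
proof -
  assume y: "y \<in> rr ` XX" "y \<in> BB"
  then obtain x where x: "x \<in> XX" "y = rr x" by blast
  obtain k where k: "k < 2" "rr x = mv x k (-1)" using rr_form[OF x(1)] by blast
  have "y \<notin> DD" using y DB_disj by blast
  then have "y \<in> Kminus d n (ssum x - 1)" using mv_down_B(5)[OF XX_D[OF x(1)], of k] k x d2 by simp
  moreover have "ssum x - 1 \<le> t" using x by (simp add: XX_def)
  ultimately show ?thesis using KS_in by simp
qed

lemma rX_DN: "y \<in> rr ` XX \<Longrightarrow> y \<notin> DN"
proof
  assume y: "y \<in> rr ` XX" "y \<in> DN"
  then obtain x where x: "x \<in> XX" "y = rr x" by blast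
  obtain j where j: "j < d" "y = mv q j (-1)" using y by (auto simp: DN_def)
  obtain k where k: "k < 2" "rr x = mv x k (-1)" "(k = 1) = (ssum x = t + 1 \<and> \<not> grp x)"
    using rr_form[OF x(1)] by blast
  have lx: "length x = d" using x XX_D len_D by auto
  have kd: "k < d" using k d2 by simp
  have "ssum y = t" using j qD by simp
  then have sx: "ssum x = t + 1" using rr_ssum[OF x(1)] x by simp
  have xe: "x = mv (mv q j (-1)) k 1"
    using mv_eq_imp[of k x "-1" "mv q j (-1)"] k x j lx kd by simp
  have "j \<noteq> k"
  proof
    assume "j = k"
    then have "x = q" using xe qD kd by simp
    then show False using x by (simp add: XX_def)
  qed
  moreover have "x ! 0 = q ! 0 + (if j = 0 then -1 else 0) + (if k = 0 then 1 else 0)"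
    using xe j qD kd d2 by (simp add: nth_mv)
  moreover have "x ! 1 = q ! 1 + (if j = 1 then -1 else 0) + (if k = 1 then 1 else 0)"
    using xe j qD kd d2 by (simp add: nth_mv)
  moreover have "(k = 1) = (\<not> (q ! 1 - q ! 0 \<le> x ! 1 - x ! 0))"
    using k(3) sx by (simp add: grp_def kap_def)
  ultimately show False using arith_DN k(1) by blast
qed

lemma construct:
  assumes g0z: "\<forall>y. y \<notin> DN \<union> Kplus d n (t + 1) \<longrightarrow> g0 y = 0"
    and bal: "(\<Sum>y\<in>nb q. \<gamma> {q, y} * g0 y) = 0"
  shows "\<exists>u\<in>Uset d n \<gamma> t. (\<forall>y\<in>DN \<union> Kplus d n (t + 1). u y = g0 y) \<and> (\<forall>y\<in>Lset d n (t + 1). u y = 0)"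
proof -
  obtain g where g1: "\<forall>y. y \<notin> rr ` XX \<longrightarrow> g y = g0 y" and g2: "\<forall>x\<in>XX. LL x g = 0"
    using tri[OF finite_XX H3 H4] by blast
  have high: "g y = 0" if "y \<in> DD" "ssum y \<ge> t + 1" for y
  proof -
    have "y \<notin> rr ` XX" using rX_lev that by force
    moreover have "y \<notin> DN" using DN_lev that by force
    moreover have "y \<notin> Kplus d n (t + 1)" using Kp_lev that DB_disj by blast
    ultimately show ?thesis using g1 g0z by simp
  qed
  have nonnode: "g y = 0" if "y \<notin> NN" for y
  proof -
    have "y \<notin> rr ` XX" using rX_lev that by force
    moreover have "y \<notin> DN" using DN_lev that by force
    moreover have "y \<notin> Kplus d n (t + 1)" using Kp_lev that by (auto simp: nodes_def)
    ultimately show ?thesis using g1 g0z by simp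
  qed
  have bz: "g y = 0" if "y \<in> BB" "y \<notin> JSset d n t" for y
  proof -
    have "y \<notin> rr ` XX" using rX_JS that by blast
    moreover have "y \<notin> DN" using DN_JS that by blast
    moreover have "y \<notin> Kplus d n (t + 1)" using Kp_JS that by blast
    ultimately show ?thesis using g1 g0z by simp
  qed
  have g0eq: "g y = g0 y" if "y \<in> DN \<union> Kplus d n (t + 1)" for y
  proof -
    have "y \<notin> rr ` XX" using that rX_DN rX_lev Kp_lev by force
    then show ?thesis using g1 by simp
  qed
  have harm: "LL p g = 0" if p: "p \<in> DD" for p
  proof (cases "p \<in> XX")
    case True then show ?thesis using g2 by simp
  next
    case False
    show ?thesis
    proof (cases "p = q")
      case True
      have "LL q g = (\<Sum>y\<in>nb q. \<gamma> {q, y} * g0 y)"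
        unfolding LL_def
      proof (intro sum.cong refl)
        fix y assume y: "y \<in> nb q"
        have gq: "g q = 0" using high qD by simp
        obtain j c where jc: "j < d" "c = 1 \<or> c = -1" "y = mv q j c" using nb_mv[OF y] by blast
        have "g y = g0 y"
        proof (cases "c = -1")
          case True
          then have "y \<in> DN" using jc by (auto simp: DN_def)
          then show ?thesis using g0eq by simp
        next
          case False
          then have "ssum y = t + 2" using jc qD by auto
          then have "y \<notin> rr ` XX" using rX_lev by force
          then show ?thesis using g1 by simp
        qed
        then show "\<gamma> {q, y} * (g y - g q) = \<gamma> {q, y} * g0 y" using gq by simp
      qed
      then show ?thesis using True bal by simp
    next
      case False
      have sp: "ssum p \<ge> t + 2" using \<open>p \<notin> XX\<close> False p by (auto simp: XX_def)
      have lp: "length p = d" using p len_D by simp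
      have "LL p g = (\<Sum>y\<in>nb p. 0)"
        unfolding LL_def
      proof (intro sum.cong refl)
        fix y assume y: "y \<in> nb p"
        obtain j c where jc: "j < d" "c = 1 \<or> c = -1" "y = mv p j c" using nb_mv[OF y] by blast
        have sy: "ssum y \<ge> t + 1" using jc sp lp by auto
        have "g y = 0"
        proof (cases "y \<in> DD")
          case True then show ?thesis using high sy by simp
        next
          case False
          then have yB: "y \<in> BB" using nb_N[OF y] by (simp add: nodes_def)
          have "y \<notin> rr ` XX" using rX_lev sy by force
          moreover have "y \<notin> DN" using DN_lev sy by force
          moreover have "y \<notin> Kplus d n (t + 1)"
          proof
            assume "y \<in> Kplus d n (t + 1)"
            then obtain z i where zi: "z \<in> DD" "i < d" "z ! i = int n" "y = mv z i 1"
              using Kp_struct by blast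
            have "p \<in> nb y" using y nb_sym by blast
            then have "p = z" using B_nb_unique[OF zi(1,2), of 1] zi yB by simp
            moreover have "ssum y = ssum z + 1" using zi len_D by simp
            moreover have "ssum y = t + 1" using \<open>y \<in> Kplus d n (t + 1)\<close> Kp_lev by blast
            ultimately show False using sp by simp
          qed
          ultimately show ?thesis using g1 g0z by simp
        qed
        then show "\<gamma> {p, y} * (g y - g p) = 0" using high[OF p] sp by simp
      qed
      then show ?thesis by simp
    qed
  qed
  define \<phi> where "\<phi> = (\<lambda>x. if x \<in> BB then g x else 0)"
  have sol: "is_dirichlet_sol d n \<gamma> \<phi> g"
    unfolding is_dirichlet_sol_def using harm nonnode by (auto simp: LL_def \<phi>_def)
  have S: "S_gamma d n \<gamma> \<phi> = g" by (rule S_eq[OF sol])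
  have ker: "\<phi> \<in> kerT1 d n \<gamma> t"
    unfolding kerT1_def using bz high S by (auto simp: \<phi>_def Lset_def)
  have ueq: "g = (\<lambda>x. if x \<in> JSset d n t \<union> LSset d n t then S_gamma d n \<gamma> \<phi> x else 0)"
  proof
    fix x
    show "g x = (if x \<in> JSset d n t \<union> LSset d n t then S_gamma d n \<gamma> \<phi> x else 0)"
    proof (cases "x \<in> JSset d n t \<union> LSset d n t")
      case True then show ?thesis using S by simp
    next
      case False
      have "g x = 0"
      proof (cases "x \<in> NN")
        case True
        then show ?thesis
        proof (cases "x \<in> DD")
          case True
          then have "ssum x \<ge> t + 1" using False by (auto simp: LSset_def)
          then show ?thesis using high True by simp
        next
          case False
          then have "x \<in> BB" using \<open>x \<in> NN\<close> by (simp add: nodes_def)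
          then show ?thesis using bz \<open>x \<notin> JSset d n t \<union> LSset d n t\<close> by simp
        qed
      next
        case False then show ?thesis using nonnode by simp
      qed
      then show ?thesis using False by simp
    qed
  qed
  have "g \<in> Uset d n \<gamma> t" unfolding Uset_def using ker ueq by blast
  moreover have "\<forall>y\<in>DN \<union> Kplus d n (t + 1). g y = g0 y" using g0eq by blast
  moreover have "\<forall>y\<in>Lset d n (t + 1). g y = 0" using high by (auto simp: Lset_def)
  ultimately show ?thesis by blast
qed

end



lemma sum_two:
  assumes "finite S" "a \<in> S" "b \<in> S" "a \<noteq> b" "\<forall>y\<in>S. y \<noteq> a \<and> y \<noteq> b \<longrightarrow> f y = 0"
  shows "sum f S = f a + f b"
proof -
  have "sum f S = sum f {a, b}"
    using assms by (intro sum.mono_neutral_right) auto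
  then show ?thesis using assms by simp
qed

lemma sum_one:
  assumes "finite S" "a \<in> S" "\<forall>y\<in>S. y \<noteq> a \<longrightarrow> f y = 0"
  shows "sum f S = f a"
proof -
  have "sum f S = sum f {a}"
    using assms by (intro sum.mono_neutral_right) auto
  then show ?thesis by simp
qed

context latt
begin

lemma down_A: "q \<in> Lset d n (t + 1) \<Longrightarrow> i < d \<Longrightarrow> mv q i (-1) \<in> AA"
proof -
  assume q: "q \<in> Lset d n (t + 1)" and i: "i < d"
  have qD: "q \<in> DD" "ssum q = t + 1" "length q = d" using q by (auto simp: Lset_def len_D)
  show ?thesis
  proof (cases "mv q i (-1) \<in> DD")
    case True then show ?thesis using qD i by (simp add: Lset_def)
  next
    case False
    then show ?thesis using mv_down_B(5)[OF qD(1) i] qD by simp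
  qed
qed

lemma down_J: "q \<in> Lset d n (t + 1) \<Longrightarrow> i < d \<Longrightarrow> mv q i (-1) \<in> Lset d n t \<union> Lset d n (t + 1) \<union> Jset d n t"
  using down_A by (auto simp: Jset_def)

context
  fixes w :: "int list set \<Rightarrow> real"
  assumes H: "\<forall>u\<in>Uset d n \<gamma> t. \<forall>p\<in>Lset d n t \<union> Lset d n (t + 1) \<union> Jset d n t.
           (\<Sum>e\<in>Et d n t. w e * Jvec d n t p u e) = 0"
begin

lemma step1:
  assumes b: "b \<in> Kplus d n (t + 1)" and x: "x \<in> nb b"
  shows "w {x, b} = 0"
proof -
  obtain z i where zi: "z \<in> DD" "i < d" "z ! i = int n" "b = mv z i 1" using Kp_struct[OF b] by blast
  have lz: "length z = d" using zi len_D by simp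
  have bB: "b \<in> BB" using b by (simp add: Kplus_def)
  have xz: "x = z" using B_nb_unique[OF zi(1,2), of 1] zi bB x by simp
  have sz: "ssum z = t" using b zi lz by (simp add: Kplus_def)
  obtain k where k: "k < d" "z ! k < int n"
  proof (rule ccontr)
    assume "\<not> thesis"
    then have ge: "\<forall>k<d. int n \<le> z ! k" using that by force
    have "ssum z = (\<Sum>k = 0..<d. z ! k)" by (simp add: ssum_def sum_list_sum_nth lz)
    also have "\<dots> \<ge> (\<Sum>k = 0..<d. int n)" using ge by (intro sum_mono) auto
    finally have "ssum z \<ge> int d * int n" by simp
    then show False using sz thi by simp
  qed
  define q where "q = mv z k 1"
  have qD: "q \<in> DD"
    unfolding inD
  proof (intro conjI)
    show "length q = d" using lz by (simp add: q_def)
    show "\<forall>j<d. 1 \<le> q ! j \<and> q ! j \<le> int n"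
    proof (intro allI impI)
      fix j assume j: "j < d"
      have "1 \<le> z ! j" "z ! j \<le> int n" using D_nth[OF zi(1) j] by auto
      then show "1 \<le> q ! j \<and> q ! j \<le> int n" using k lz j by (auto simp: q_def nth_mv)
    qed
  qed
  have qL: "q \<in> Lset d n (t + 1)" using qD sz k lz by (simp add: Lset_def q_def)
  interpret cons d n \<gamma> t q by unfold_locales (rule qL)
  define g0 where "g0 = (\<lambda>y. if y = b then 1 else (0::real))"
  have g0z: "\<forall>y. y \<notin> DN \<union> Kplus d n (t + 1) \<longrightarrow> g0 y = 0" using b by (simp add: g0_def)
  have bal: "(\<Sum>y\<in>nb q. \<gamma> {q, y} * g0 y) = 0"
  proof (intro sum.neutral ballI)
    fix y assume y: "y \<in> nb q"
    obtain j c where jc: "j < d" "c = 1 \<or> c = -1" "y = mv q j c" using nb_mv[OF y] by blast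
    have "ssum y \<noteq> t + 1" using jc qD by auto
    moreover have "ssum b = t + 1" using b by (simp add: Kplus_def)
    ultimately show "\<gamma> {q, y} * g0 y = 0" by (auto simp: g0_def)
  qed
  obtain u where u: "u \<in> Uset d n \<gamma> t" "\<forall>y\<in>DN \<union> Kplus d n (t + 1). u y = g0 y"
    using construct[OF g0z bal] by blast
  have zq: "z = mv q k (-1)" using lz k by (simp add: q_def)
  have zDN: "z \<in> DN" unfolding DN_def using k zq by blast
  have uz: "u z = 0" using u zDN sz b by (auto simp: g0_def Kplus_def)
  have ub: "u b = 1" using u b by (simp add: g0_def)
  have bJ: "b \<in> Lset d n t \<union> Lset d n (t + 1) \<union> Jset d n t" using b by (simp add: Jset_def)
  have bBt: "b \<in> BBt" using b by simp
  have "(\<Sum>e\<in>Et d n t. w e * Jvec d n t b u e) = 0" using H u(1) bJ by blast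
  then have "(\<Sum>x\<in>nb b \<inter> AA. w {x, b} * (u b - u x)) = 0"
    unfolding Jsum_B[OF bBt] .
  moreover have "(\<Sum>x\<in>nb b \<inter> AA. w {x, b} * (u b - u x)) = w {z, b} * (u b - u z)"
  proof (rule sum_one)
    show "finite (nb b \<inter> AA)" using finite_nb by simp
    show "z \<in> nb b \<inter> AA" using x xz zi sz by (simp add: Lset_def)
    show "\<forall>y\<in>nb b \<inter> AA. y \<noteq> z \<longrightarrow> w {y, b} * (u b - u y) = 0"
      using B_nb_unique[OF zi(1,2), of 1] zi bB by auto
  qed
  ultimately show ?thesis using uz ub xz by simp
qed

lemma step23:
  assumes q: "q \<in> Lset d n (t + 1)" and ij: "i < d" "j < d" "i \<noteq> j"
  shows "w {mv q i (-1), q} * \<gamma> {q, mv q j (-1)} = w {mv q j (-1), q} * \<gamma> {q, mv q i (-1)}"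
    "(\<Sum>y\<in>nb (mv q i (-1)) \<inter> BBt. w {mv q i (-1), y}) = 0"
proof -
  interpret cons d n \<gamma> t q by unfold_locales (rule q)
  define x0 where "x0 = mv q i (-1)"
  define x1 where "x1 = mv q j (-1)"
  have ne: "x0 \<noteq> x1"
  proof
    assume "x0 = x1"
    then have "x0 ! i = x1 ! i" by simp
    then show False using ij qD by (simp add: x0_def x1_def nth_mv)
  qed
  have x0n: "x0 \<in> nb q" and x1n: "x1 \<in> nb q" using mv_nb[OF qD(1)] ij by (auto simp: x0_def x1_def)
  have x0DN: "x0 \<in> DN" and x1DN: "x1 \<in> DN" using ij by (auto simp: DN_def x0_def x1_def)
  have g0p: "\<gamma> {q, x0} > 0" "\<gamma> {q, x1} > 0" using gpos_nb x0n x1n by auto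
  define g0 where "g0 = (\<lambda>y. if y = x0 then \<gamma> {q, x1} else if y = x1 then - \<gamma> {q, x0} else 0)"
  have g0z: "\<forall>y. y \<notin> DN \<union> Kplus d n (t + 1) \<longrightarrow> g0 y = 0"
    using x0DN x1DN by (auto simp: g0_def)
  have bal: "(\<Sum>y\<in>nb q. \<gamma> {q, y} * g0 y) = 0"
  proof -
    have "(\<Sum>y\<in>nb q. \<gamma> {q, y} * g0 y) = \<gamma> {q, x0} * g0 x0 + \<gamma> {q, x1} * g0 x1"
      by (rule sum_two[OF finite_nb x0n x1n ne]) (auto simp: g0_def)
    then show ?thesis using ne by (simp add: g0_def)
  qed
  obtain u where u: "u \<in> Uset d n \<gamma> t" "\<forall>y\<in>DN \<union> Kplus d n (t + 1). u y = g0 y"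
    "\<forall>y\<in>Lset d n (t + 1). u y = 0"
    using construct[OF g0z bal] by blast
  have ux0: "u x0 = \<gamma> {q, x1}" and ux1: "u x1 = - \<gamma> {q, x0}"
    using u x0DN x1DN ne by (auto simp: g0_def)
  have uq: "u q = 0" using u q by simp
  have qBt: "q \<in> BBt" using q by simp
  have qJ: "q \<in> Lset d n t \<union> Lset d n (t + 1) \<union> Jset d n t" using q by simp
  have "(\<Sum>e\<in>Et d n t. w e * Jvec d n t q u e) = 0" using H u(1) qJ by blast
  then have "(\<Sum>x\<in>nb q \<inter> AA. w {x, q} * (u q - u x)) = 0"
    unfolding Jsum_B[OF qBt] .
  moreover have "(\<Sum>x\<in>nb q \<inter> AA. w {x, q} * (u q - u x))
      = w {x0, q} * (u q - u x0) + w {x1, q} * (u q - u x1)"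
  proof (rule sum_two)
    show "finite (nb q \<inter> AA)" using finite_nb by simp
    show "x0 \<in> nb q \<inter> AA" "x1 \<in> nb q \<inter> AA" using x0n x1n down_A[OF q] ij
      by (auto simp: x0_def x1_def)
    show "x0 \<noteq> x1" by (rule ne)
    show "\<forall>y\<in>nb q \<inter> AA. y \<noteq> x0 \<and> y \<noteq> x1 \<longrightarrow> w {y, q} * (u q - u y) = 0"
    proof (intro ballI impI)
      fix y assume y: "y \<in> nb q \<inter> AA" and yn: "y \<noteq> x0 \<and> y \<noteq> x1"
      obtain k c where kc: "k < d" "c = 1 \<or> c = -1" "y = mv q k c" using nb_mv y by blast
      have "ssum y = t" using y A_lev by blast
      then have "c = -1" using kc qD by auto
      then have "y \<in> DN" using kc by (auto simp: DN_def)
      then have "u y = 0" using u yn by (auto simp: g0_def)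
      then show "w {y, q} * (u q - u y) = 0" using uq by simp
    qed
  qed
  ultimately have "w {x0, q} * (- \<gamma> {q, x1}) + w {x1, q} * \<gamma> {q, x0} = 0"
    using ux0 ux1 uq by simp
  then show "w {mv q i (-1), q} * \<gamma> {q, mv q j (-1)} = w {mv q j (-1), q} * \<gamma> {q, mv q i (-1)}"
    unfolding x0_def[symmetric] x1_def[symmetric] by (simp add: algebra_simps)
  have x0A: "x0 \<in> AA" using down_A[OF q ij(1)] by (simp add: x0_def)
  have x0J: "x0 \<in> Lset d n t \<union> Lset d n (t + 1) \<union> Jset d n t" using x0A by (auto simp: Jset_def)
  have "(\<Sum>e\<in>Et d n t. w e * Jvec d n t x0 u e) = 0" using H u(1) x0J by blast
  then have "(\<Sum>y\<in>nb x0 \<inter> BBt. w {x0, y} * (u x0 - u y)) = 0"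
    unfolding Jsum_A[OF x0A] .
  moreover have "(\<Sum>y\<in>nb x0 \<inter> BBt. w {x0, y} * (u x0 - u y)) = (\<Sum>y\<in>nb x0 \<inter> BBt. w {x0, y}) * u x0"
    unfolding sum_distrib_right
  proof (intro sum.cong refl)
    fix y assume y: "y \<in> nb x0 \<inter> BBt"
    show "w {x0, y} * (u x0 - u y) = w {x0, y} * u x0"
    proof (cases "y \<in> Lset d n (t + 1)")
      case True then show ?thesis using u by simp
    next
      case False
      then have "y \<in> Kplus d n (t + 1)" using y by simp
      moreover have "x0 \<in> nb y" using y nb_sym by blast
      ultimately have "w {x0, y} = 0" using step1 by blast
      then show ?thesis by simp
    qed
  qed
  ultimately have "(\<Sum>y\<in>nb x0 \<inter> BBt. w {x0, y}) * \<gamma> {q, x1} = 0" using ux0 by simp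
  then show "(\<Sum>y\<in>nb (mv q i (-1)) \<inter> BBt. w {mv q i (-1), y}) = 0"
    using g0p unfolding x0_def by simp
qed

lemma step4_aux: "\<forall>q\<in>Lset d n (t + 1). nat (q ! 0) = m \<longrightarrow> w {mv q 0 (-1), q} = 0"
proof (induction m rule: less_induct)
  case (less m)
  show ?case
  proof (intro ballI impI)
    fix q assume q: "q \<in> Lset d n (t + 1)" and qm: "nat (q ! 0) = m"
    have qD: "q \<in> DD" "ssum q = t + 1" "length q = d" using q by (auto simp: Lset_def len_D)
    have d0: "0 < d" "1 < d" using d2 by auto
    define x0 where "x0 = mv q 0 (-1)"
    have x0A: "x0 \<in> AA" using down_A[OF q d0(1)] by (simp add: x0_def)
    have x0D: "x0 \<in> NN" using A_N[OF x0A] .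
    have lx0: "length x0 = d" using qD by (simp add: x0_def)
    have S0: "(\<Sum>y\<in>nb x0 \<inter> BBt. w {x0, y}) = 0"
      using step23(2)[OF q d0(1) d0(2)] by (simp add: x0_def)
    have qin: "q \<in> nb x0 \<inter> BBt"
      using mv_nb[OF qD(1) d0(1), of "-1"] nb_sym q by (auto simp: x0_def)
    have "(\<Sum>y\<in>nb x0 \<inter> BBt. w {x0, y}) = w {x0, q}"
    proof (rule sum_one[OF _ qin])
      show "finite (nb x0 \<inter> BBt)" using finite_nb by simp
      show "\<forall>y\<in>nb x0 \<inter> BBt. y \<noteq> q \<longrightarrow> w {x0, y} = 0"
      proof (intro ballI impI)
        fix y assume y: "y \<in> nb x0 \<inter> BBt" and yq: "y \<noteq> q"
        show "w {x0, y} = 0"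
        proof (cases "y \<in> Kplus d n (t + 1)")
          case True
          have "x0 \<in> nb y" using y nb_sym by blast
          then show ?thesis using step1 True by blast
        next
          case False
          then have yL: "y \<in> Lset d n (t + 1)" using y by simp
          obtain j c where jc: "j < d" "c = 1 \<or> c = -1" "y = mv x0 j c" using nb_mv y by blast
          have "ssum y = t + 1" using yL by (simp add: Lset_def)
          moreover have "ssum x0 = t" using x0A A_lev by blast
          ultimately have c1: "c = 1" using jc lx0 by auto
          have j0: "j \<noteq> 0"
          proof
            assume "j = 0"
            then have "y = q" using jc c1 qD d0 by (simp add: x0_def)
            then show False using yq by simp
          qed
          have y0: "y ! 0 = q ! 0 - 1" using jc c1 j0 qD d0 by (simp add: x0_def nth_mv)
          have yD: "y \<in> DD" using yL by (simp add: Lset_def)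
          have "1 \<le> y ! 0" using D_nth[OF yD d0(1)] by simp
          then have lt: "nat (y ! 0) < m" using y0 qm by simp
          have IH: "w {mv y 0 (-1), y} = 0" using less.IH[OF lt] yL by blast
          have x0y: "x0 = mv y j (-1)" using jc c1 lx0 by simp
          have r: "w {mv y 0 (-1), y} * \<gamma> {y, mv y j (-1)} = w {mv y j (-1), y} * \<gamma> {y, mv y 0 (-1)}"
            using step23(1)[OF yL d0(1) jc(1)] j0 by simp
          have "\<gamma> {y, mv y 0 (-1)} > 0" using gpos_nb mv_nb[OF yD d0(1), of "-1"] by simp
          then have "w {mv y j (-1), y} = 0" using r IH by simp
          then show ?thesis using x0y by (simp add: insert_commute)
        qed
      qed
    qed
    then show "w {mv q 0 (-1), q} = 0" using S0 by (simp add: x0_def)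
  qed
qed

lemma step5:
  assumes q: "q \<in> Lset d n (t + 1)" and j: "j < d"
  shows "w {mv q j (-1), q} = 0"
proof (cases "j = 0")
  case True then show ?thesis using step4_aux q by blast
next
  case False
  have qD: "q \<in> DD" using q by (simp add: Lset_def)
  have d0: "0 < d" using d2 by simp
  have r: "w {mv q 0 (-1), q} * \<gamma> {q, mv q j (-1)} = w {mv q j (-1), q} * \<gamma> {q, mv q 0 (-1)}"
    using step23(1)[OF q d0 j] False by simp
  have "\<gamma> {q, mv q 0 (-1)} > 0" using gpos_nb mv_nb[OF qD d0, of "-1"] by simp
  moreover have "w {mv q 0 (-1), q} = 0" using step4_aux q by blast
  ultimately show ?thesis using r by simp
qed

lemma main: "\<forall>e\<in>Et d n t. w e = 0"
proof
  fix e assume "e \<in> Et d n t"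
  then obtain p y where e: "e \<in> EE" "e = {p, y}" "p \<in> AA" "y \<in> BBt" unfolding Et_alt by blast
  have pn: "p \<in> nb y" using e by (simp add: nb_iff insert_commute)
  show "w e = 0"
  proof (cases "y \<in> Kplus d n (t + 1)")
    case True then show ?thesis using step1 pn e by blast
  next
    case False
    then have yL: "y \<in> Lset d n (t + 1)" using e by simp
    have yD: "y \<in> DD" "ssum y = t + 1" "length y = d" using yL by (auto simp: Lset_def len_D)
    obtain j c where jc: "j < d" "c = 1 \<or> c = -1" "p = mv y j c" using nb_mv pn by blast
    have "ssum p = t" using e A_lev by blast
    then have "c = -1" using jc yD by auto
    then show ?thesis using step5[OF yL jc(1)] jc e by simp
  qed
qed

end

end


theorem theorem4p2:
  fixes d n :: nat and t :: int and \<gamma> :: "int list set \<Rightarrow> real"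
    and w :: "int list set \<Rightarrow> real"
  assumes "d \<ge> 2" and "n \<ge> 1"
    and "\<forall>e\<in>edges d n. \<gamma> e > 0"
    and "int d - 1 \<le> t" and "t \<le> int d * int n - 1"
    and "\<forall>u\<in>Uset d n \<gamma> t. \<forall>p\<in>Lset d n t \<union> Lset d n (t + 1) \<union> Jset d n t.
           (\<Sum>e\<in>Et d n t. w e * Jvec d n t p u e) = 0"
  shows "\<forall>e\<in>Et d n t. w e = 0"
proof -
  interpret latt d n \<gamma> t
    by unfold_locales (use assms in auto)
  show ?thesis by (rule main[OF assms(6)])
qed

end
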